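(* Let $\varepsilon>0$ be a constant, $C=12/\varepsilon$, $c=1/(8e)$, and let $k\geq 2$ be a constant integer. Let $G=(V,E)$ be a graph on $n$ vertices with $\delta(G)\geq\left(\frac12+\varepsilon\right)n$, and let $L\subseteq V$ be a set with $|L|\leq C\log n$ such that every pair of distinct vertices of $V\setminus L$ has at least $12\log n$ common $G$-neighbors in $L$. Let $G_k'$ be the subgraph of $G_k$ induced by $V\setminus L$. Then with high probability: every component of $G_k'$ has at least $cn$ vertices, and moreover, for every set $A$ of $k-1$ vertices, removing $A$ from $G_k'$ produces a graph each of whose components is either an isolated vertex or has at least $cn$ vertices.
   Context: The random graph $G_k$ on vertex set $V$: each vertex $v\in V$ independently makes $k$ choices, each uniformly at random from the $G$-neighborhood of $v$ (with replacement), and $G_k$ has edge $\{v,w\}$ whenever $v$ chose $w$ or $w$ chose $v$. "With high probability" means with probability tending to $1$ as $n\to\infty$. $\log$ is the natural logarithm. *)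

theory Defs
  imports "HOL-Probability.Probability"
begin

definition simple_graph :: "'a set \<Rightarrow> ('a \<Rightarrow> 'a \<Rightarrow> bool) \<Rightarrow> bool" where
  "simple_graph V E \<longleftrightarrow> finite V \<and> (\<forall>v. \<not> E v v) \<and> (\<forall>v w. E v w \<longrightarrow> E w v)"

definition nbhd :: "'a set \<Rightarrow> ('a \<Rightarrow> 'a \<Rightarrow> bool) \<Rightarrow> 'a \<Rightarrow> 'a set" where
  "nbhd V E v = {w \<in> V. E v w}"

(* The random choices: f (v,i) is the i-th choice of vertex v (i < k), each
   independent and uniform on the G-neighbourhood of v. *)
definition choices_pmf :: "'a set \<Rightarrow> ('a \<Rightarrow> 'a \<Rightarrow> bool) \<Rightarrow> nat \<Rightarrow> 'a \<Rightarrow> ('a \<times> nat \<Rightarrow> 'a) pmf" where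
  "choices_pmf V E k dflt = Pi_pmf (V \<times> {..<k}) dflt (\<lambda>(v,i). pmf_of_set (nbhd V E v))"

definition Gk_edge :: "nat \<Rightarrow> ('a \<times> nat \<Rightarrow> 'a) \<Rightarrow> 'a \<Rightarrow> 'a \<Rightarrow> bool" where
  "Gk_edge k f v w \<longleftrightarrow> (\<exists>i<k. f (v,i) = w \<or> f (w,i) = v)"

definition component :: "'a set \<Rightarrow> ('a \<Rightarrow> 'a \<Rightarrow> bool) \<Rightarrow> 'a \<Rightarrow> 'a set" where
  "component S R v = {w. (\<lambda>x y. x \<in> S \<and> y \<in> S \<and> R x y)\<^sup>*\<^sup>* v w}"

end

theory Submission
  imports Defs
begin

lemma half_exp: "exp 1 * 2^k * (1 / (8 * exp 1)) ^ (k - 1) \<le> (1/2::real)" if "k \<ge> 2" for k :: nat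
proof -
  define j where "j = k - 2"
  have kj: "k = Suc (Suc j)" using that unfolding j_def by simp
  define q :: real where "q = 1 / (8 * exp 1)"
  have e: "exp (1::real) > 0" by simp
  have eq: "exp 1 * 4 * q = 1/2" unfolding q_def using e by (simp add: field_simps)
  have e1: "exp (1::real) \<ge> 1" by simp
  have e4: "1 \<le> exp (1::real) * 4" using e1 by linarith
  have q0: "0 \<le> 2*q" "2*q \<le> 1" unfolding q_def using e e4 by (auto simp: field_simps)
  have p1: "(2*q)^j \<le> 1" using q0 by (rule power_le_one)
  have "exp 1 * 2^k * q ^ (k - 1) = (exp 1 * 4 * q) * (2^j * q^j)"
    by (simp add: kj)
  also have "\<dots> = (1/2) * (2*q)^j" by (simp only: eq power_mult_distrib)
  also have "\<dots> \<le> 1/2" using p1 by simp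
  finally show ?thesis unfolding q_def .
qed

lemma pow_pred: "k \<ge> 1 \<Longrightarrow> (x::real) ^ k = x * x ^ (k-1)"
  by (cases k) auto

lemma pow_fact_le_exp: "0 \<le> (x::real) \<Longrightarrow> x^n / fact n \<le> exp x"
proof -
  assume x: "0 \<le> x"
  have s: "(\<lambda>n. x^n /\<^sub>R fact n) sums exp x" by (rule exp_converges)
  have "sum (\<lambda>n. x^n /\<^sub>R fact n) {n} \<le> suminf (\<lambda>n. x^n /\<^sub>R fact n)"
    by (rule sum_le_suminf) (use s x in \<open>auto simp: sums_iff\<close>)
  then show ?thesis using s by (simp add: sums_iff divide_inverse mult.commute)
qed

lemma choose_le_exp: 
  assumes "s \<ge> 1"
  shows "real (n choose s) \<le> (exp 1 * real n / real s) ^ s"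
proof -
  have "real (n choose s) * fact s \<le> real n ^ s"
  proof -
    have "real ((n choose s) * fact s) \<le> real (n ^ s)"
      using binomial_fact_pow[of n s] by (simp only: of_nat_le_iff)
    then show ?thesis by simp
  qed
  hence 1: "real (n choose s) \<le> real n ^ s / fact s"
    by (simp add: field_simps)
  have "real s ^ s / fact s \<le> exp (real s)" by (rule pow_fact_le_exp) simp
  hence h1: "1 / fact s \<le> exp (real s) / real s ^ s" using assms
    by (simp add: field_simps)
  have "real n ^ s / fact s \<le> real n ^ s * (exp (real s) / real s ^ s)"
    using mult_left_mono[OF h1, of "real n ^ s"] by simp
  also have "exp (real s) = exp 1 ^ s" by (simp add: exp_of_nat_mult[symmetric])
  also have "real n ^ s * (exp 1 ^ s / real s ^ s) = (exp 1 * real n / real s) ^ s"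
    by (simp add: power_divide power_mult_distrib)
  finally show ?thesis using 1 by linarith
qed


lemma half_pow_le:
  fixes M :: real
  assumes n: "n \<ge> 1" and M: "M \<ge> 2 * (real k + 1)" and s: "real s \<ge> M * ln (real n)"
  shows "(1/2::real)^s \<le> 1 / real n ^ (k+1)"
proof -
  have l2: "ln (2::real) \<ge> 1/2" using ln2_ge_two_thirds by linarith
  have ln0: "ln (real n) \<ge> 0" using n by simp
  have "real (k+1) * ln (real n) \<le> (M * ln 2) * ln (real n)"
  proof (rule mult_right_mono[OF _ ln0])
    have "M * (1/2) \<le> M * ln 2" using M l2 by (intro mult_left_mono) auto
    moreover have "real (k+1) = real k + 1" by simp
    ultimately show "real (k+1) \<le> M * ln 2" using M by argo
  qed
  also have "\<dots> = (M * ln (real n)) * ln 2" by simp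
  also have "\<dots> \<le> real s * ln 2" using s by (intro mult_right_mono) auto
  finally have "exp (real (k+1) * ln (real n)) \<le> exp (real s * ln 2)" by simp
  moreover have "exp (real (k+1) * ln (real n)) = real n ^ (k+1)"
  proof -
    have "exp (real (k+1) * ln (real n)) = exp (ln (real n)) ^ (k+1)" by (rule exp_of_nat_mult)
    then show ?thesis using n by simp
  qed
  moreover have "exp (real s * ln 2) = (2::real) ^ s"
  proof -
    have "exp (real s * ln 2) = exp (ln (2::real)) ^ s" by (rule exp_of_nat_mult)
    then show ?thesis by simp
  qed
  ultimately have "real n ^ (k+1) \<le> 2 ^ s" by simp
  then show ?thesis using n by (simp add: power_divide field_simps)
qed

lemma ln_ge1: "real n \<ge> 3 \<Longrightarrow> ln (real n) \<ge> 1"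
proof -
  assume n: "real n \<ge> 3"
  have "exp 1 \<le> real n" using exp_le n by linarith
  then have "ln (exp 1) \<le> ln (real n)" using n by (subst ln_le_cancel_iff) auto
  then show ?thesis by simp
qed

lemma term_bound:
  fixes \<epsilon> a M P Lc bt :: real and n s k :: nat
  assumes eps: "\<epsilon> > 0" and k: "k \<ge> 2" and n: "n \<ge> 3" and a: "a \<ge> 0"
   and M1: "M \<ge> 2*(real k+1)" and M2: "M * (2*\<epsilon>) \<ge> real k + a"
   and P: "P = M + real k + a"
   and bt: "bt = exp 1 * (2*P*ln (real n))^k / real n^(k-1)"
   and s1: "s \<ge> 1" and sc: "real s < 1/(8*exp 1) * real n"
   and L0: "0 \<le> Lc" and La: "Lc \<le> a * ln (real n)"
  shows "real (n choose s) * ((real s + real (k-1) + Lc) / ((1/2+\<epsilon>)*real n))^(k * s)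
     \<le> (if real s < M * ln (real n) then bt^s else 0) + 1/real n^(k+1)"
proof -
  define lg where "lg = ln (real n)"
  have l1: "lg \<ge> 1" unfolding lg_def using n ln_ge1 by simp
  define \<tau> where "\<tau> = real s + real (k-1) + Lc"
  define d where "d = (1/2+\<epsilon>)*real n"
  have n0: "real n > 0" using n by simp
  have d0: "d > 0" unfolding d_def using eps n0 by simp
  have dn: "d \<ge> real n / 2" unfolding d_def using eps n0 by (simp add: field_simps)
  have t0: "\<tau> \<ge> 0" unfolding \<tau>_def using L0 by simp
  have k1: "real (k-1) \<le> real k" by simp
  define b where "b = exp 1 * real n / real s * (\<tau>/d)^k"
  have b0: "b \<ge> 0" unfolding b_def using t0 d0 by simp
  have X: "real (n choose s) * (\<tau>/d)^(k * s) \<le> b^s"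
  proof -
    have "real (n choose s) * (\<tau>/d)^(k * s) \<le> (exp 1 * real n / real s)^s * (\<tau>/d)^(k * s)"
      using choose_le_exp[OF s1, of n] t0 d0 by (intro mult_right_mono) auto
    also have "\<dots> = b^s" unfolding b_def by (simp only: power_mult power_mult_distrib)
    finally show ?thesis .
  qed
  show ?thesis
  proof (cases "real s < M * lg")
    case False
    have "real (k-1) + Lc \<le> (real k + a) * lg"
    proof -
      have "real k * 1 \<le> real k * lg" using l1 by (intro mult_left_mono) auto
      hence "real k \<le> real k * lg" by simp
      moreover have "Lc \<le> a * lg" using La lg_def by simp
      ultimately show ?thesis using k1 by (simp add: algebra_simps)
    qed
    also have "\<dots> \<le> M * (2*\<epsilon>) * lg" using M2 l1 by (intro mult_right_mono) auto
    also have "\<dots> = 2*\<epsilon> * (M * lg)" by simp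
    also have "\<dots> \<le> 2*\<epsilon> * real s" using False eps by (intro mult_left_mono) auto
    finally have "\<tau> \<le> (1 + 2*\<epsilon>) * real s" unfolding \<tau>_def by (simp add: algebra_simps)
    hence "\<tau>/d \<le> (1 + 2*\<epsilon>) * real s / d" using d0 by (simp add: divide_right_mono)
    also have "\<dots> = 2 * real s / real n"
    proof -
      have h: "1/2+\<epsilon> \<noteq> 0" using eps by simp
      have eq: "(1 + 2*\<epsilon>) * real s = (1/2+\<epsilon>) * (2 * real s)" by (simp add: algebra_simps)
      show ?thesis unfolding d_def by (subst eq) (rule nonzero_mult_divide_mult_cancel_left[OF h])
    qed
    finally have td: "\<tau>/d \<le> 2 * real s / real n" .
    define x where "x = real s / real n"
    have x0: "x > 0" unfolding x_def using s1 n0 by simp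
    have xc: "x \<le> 1/(8*exp 1)" unfolding x_def using sc n0 by (simp add: field_simps)
    have "b \<le> exp 1 * real n / real s * (2 * real s / real n)^k"
      unfolding b_def using td t0 d0 s1 by (intro mult_left_mono power_mono) auto
    also have "\<dots> = exp 1 * 2^k * x^(k-1)"
    proof -
      have "x^k = x * x^(k-1)" using k by (intro pow_pred) auto
      moreover have "exp 1 * real n / real s * (2 * real s / real n)^k = exp 1 * 2^k * x^k / x"
        unfolding x_def using s1 n0 by (simp add: power_mult_distrib power_divide field_simps)
      ultimately show ?thesis using x0 by simp
    qed
    also have "\<dots> \<le> exp 1 * 2^k * (1/(8*exp 1))^(k-1)"
      using x0 xc by (intro mult_left_mono power_mono) auto
    also have "\<dots> \<le> 1/2" using half_exp[OF k] .
    finally have "b \<le> 1/2" .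
    hence "b^s \<le> (1/2)^s" using b0 by (intro power_mono) auto
    also have "\<dots> \<le> 1 / real n^(k+1)"
      using n M1 False by (intro half_pow_le) (auto simp: lg_def)
    finally show ?thesis using X False unfolding \<tau>_def d_def lg_def by simp
  next
    case True
    have "\<tau> \<le> P * lg"
    proof -
      have "real k * 1 \<le> real k * lg" using l1 by (intro mult_left_mono) auto
      hence "real (k-1) \<le> real k * lg" using k1 by simp
      moreover have "Lc \<le> a * lg" using La lg_def by simp
      ultimately show ?thesis using True unfolding \<tau>_def P by (simp add: algebra_simps)
    qed
    hence "\<tau>/d \<le> P * lg / d" using d0 by (simp add: divide_right_mono)
    also have "\<dots> \<le> P * lg / (real n / 2)"
      using dn n0 l1 M1 a P by (intro divide_left_mono mult_nonneg_nonneg) auto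
    finally have td: "\<tau>/d \<le> 2*P*lg / real n" by (simp add: mult.commute mult.left_commute)
    have "b \<le> exp 1 * real n / real s * (2*P*lg / real n)^k"
      unfolding b_def using td t0 d0 s1 by (intro mult_left_mono power_mono) auto
    also have "\<dots> \<le> exp 1 * real n * (2*P*lg / real n)^k"
    proof -
      have "exp 1 * real n / real s \<le> exp 1 * real n / 1" using s1 n0 by (intro divide_left_mono) auto
      hence "exp 1 * real n / real s \<le> exp 1 * real n" by simp
      moreover have "0 \<le> (2*P*lg / real n)^k" using l1 M1 a P n0 by simp
      ultimately show ?thesis by (intro mult_right_mono) auto
    qed
    also have "\<dots> = bt"
    proof -
      have "real n ^ k = real n * real n ^ (k-1)" using k by (intro pow_pred) auto
      then show ?thesis unfolding bt lg_def using n0 by (simp add: power_divide)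
    qed
    finally have "b \<le> bt" .
    hence "b^s \<le> bt^s" using b0 by (intro power_mono) auto
    hence A: "real (n choose s) * ((real s + real (k-1) + Lc) / ((1/2+\<epsilon>)*real n))^(k * s) \<le> bt^s"
      using X unfolding \<tau>_def d_def by linarith
    have T': "real s < M * ln (real n)" using True lg_def by simp
    have Z: "0 \<le> 1/real n^(k+1)" by simp
    show ?thesis using A Z T' by (simp only: if_P[OF T'] if_True)
  qed
qed

lemma ln_pow_bound:
  fixes x :: real
  assumes x: "x \<ge> 1" and j: "j \<ge> 1"
  shows "ln x ^ j \<le> (2 * real j)^j * sqrt x"
proof -
  define \<alpha> where "\<alpha> = 1 / (2 * real j)"
  have a0: "\<alpha> > 0" unfolding \<alpha>_def using j by simp
  have xp: "x powr \<alpha> > 0" using x by simp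
  have "ln (x powr \<alpha>) \<le> x powr \<alpha> - 1" using xp by (rule ln_le_minus_one)
  moreover have "ln (x powr \<alpha>) = \<alpha> * ln x" using x by (simp add: ln_powr)
  ultimately have "\<alpha> * ln x \<le> x powr \<alpha>" by simp
  hence l: "ln x \<le> (2 * real j) * x powr \<alpha>" using a0 j unfolding \<alpha>_def by (simp add: field_simps)
  have "ln x ^ j \<le> ((2 * real j) * x powr \<alpha>) ^ j"
    using l x by (intro power_mono) auto
  also have "\<dots> = (2 * real j)^j * (x powr \<alpha>)^j" by (simp add: power_mult_distrib)
  also have "(x powr \<alpha>)^j = x powr (\<alpha> * real j)"
    using x by (simp add: powr_realpow[symmetric] powr_powr)
  also have "\<alpha> * real j = 1/2" unfolding \<alpha>_def using j by simp
  also have "x powr (1/2) = sqrt x" using x by (simp add: powr_half_sqrt)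
  finally show ?thesis .
qed

lemma final_analytic:
  fixes M P \<delta> :: real and k :: nat
  assumes k: "k \<ge> 2" and M: "M \<ge> 1" and P: "P \<ge> 1" and d: "\<delta> > 0"
  shows "\<exists>N\<ge>3. \<forall>n\<ge>N. exp 1 * (2*P*ln (real n))^k / real n^(k-1) \<le> 1 \<and>
     (exp 1 * (2*P*ln (real n))^k / real n^(k-1)) * (M * ln (real n)) + 1/real n^k
     + real n^(k-1) * ((exp 1 * (2*P*ln (real n))^k / real n^(k-1))^2 * (M * ln (real n)) + 1/real n^k) \<le> \<delta>"
proof -
  define j where "j = 2*k+1"
  define Q0 where "Q0 = M * exp 1 ^ 2 * (2*P)^(2*k)"
  define Q where "Q = Q0 * (2 * real j)^j"
  have Q00: "Q0 \<ge> 1"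
  proof -
    have "exp 1 ^ 2 \<ge> (1::real)" by simp
    moreover have "(2*P)^(2*k) \<ge> 1" using P by (intro one_le_power) auto
    ultimately have "1*1 \<le> M * exp 1 ^ 2" "(1::real) \<le> (2*P)^(2*k)" using M by (auto intro: mult_mono[of 1 M 1 "exp 1 ^ 2", simplified])
    hence "1*1 \<le> (M * exp 1 ^ 2) * (2*P)^(2*k)" by (intro mult_mono) auto
    then show ?thesis unfolding Q0_def by simp
  qed
  have Q0: "Q \<ge> 0" unfolding Q_def using Q00 by simp
  define N where "N = nat \<lceil>((2*Q+2)/\<delta> + Q)^2\<rceil> + 3"
  show ?thesis
  proof (intro exI[of _ N] conjI allI impI)
    show "N \<ge> 3" unfolding N_def by simp
    fix n assume nN: "N \<le> n"
    have n3: "real n \<ge> 3" using nN unfolding N_def by linarith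
    have n0: "real n > 0" using n3 by simp
    define lg where "lg = ln (real n)"
    have l1: "lg \<ge> 1" unfolding lg_def using n3 ln_ge1 by simp
    define y where "y = sqrt (real n)"
    have y0: "y > 0" unfolding y_def using n0 by simp
    have yy: "y * y = real n" unfolding y_def using n0 by simp
    have ybig: "y \<ge> (2*Q+2)/\<delta> + Q"
    proof -
      have "((2*Q+2)/\<delta> + Q)^2 \<le> real n" using nN unfolding N_def by linarith
      hence "sqrt (((2*Q+2)/\<delta> + Q)^2) \<le> y" unfolding y_def by (rule real_sqrt_le_mono)
      moreover have "(2*Q+2)/\<delta> + Q \<ge> 0" using Q0 d by simp
      ultimately show ?thesis by simp
    qed
    have y1: "y \<ge> 1" unfolding y_def using n3 by simp
    have yn: "y \<le> real n"
    proof -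
      have "y * 1 \<le> y * y" using y0 y1 by (intro mult_left_mono) auto
      then show ?thesis using yy by simp
    qed
    have lj: "lg ^ j \<le> (2 * real j)^j * y" unfolding lg_def y_def j_def
      using n3 by (intro ln_pow_bound) auto
    have nk1: "real n ^ (k-1) \<ge> real n"
      using power_increasing[of 1 "k-1" "real n"] n3 k by simp
    have nk: "real n ^ k = real n * real n ^ (k-1)"
      using k by (intro pow_pred) auto
    define bt where "bt = exp 1 * (2*P*lg)^k / real n^(k-1)"
    have nkp: "real n ^ (k-1) > 0" using n0 by simp
    have key: "Q0 * lg ^ j / real n ^ (k-1) \<le> Q / y"
    proof -
      have "Q0 * lg ^ j / real n ^ (k-1) \<le> Q0 * lg ^ j / real n"
        using nk1 n0 Q00 l1 by (intro divide_left_mono) auto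
      also have "\<dots> \<le> Q0 * ((2 * real j)^j * y) / real n"
        using lj Q00 n0 by (intro divide_right_mono mult_left_mono) auto
      also have "\<dots> = Q / y" unfolding Q_def yy[symmetric] using y0 by (simp add: field_simps)
      finally show ?thesis .
    qed
    have lpow: "lg ^ m \<le> lg ^ j" if "m \<le> j" for m
      using l1 that by (intro power_increasing) auto
    have ep: "exp 1 \<le> exp (1::real) ^ 2"
    proof -
      have "exp 1 * 1 \<le> exp 1 * exp (1::real)" by (intro mult_left_mono) auto
      then show ?thesis by (simp add: power2_eq_square)
    qed
    have pp: "(2*P)^k \<le> (2*P)^(2*k)" using P by (intro power_increasing) auto
    have e0: "exp (1::real) \<ge> 0" by simp
    have epp: "exp 1 * (2*P)^k \<le> exp 1 ^ 2 * (2*P)^(2*k)"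
      by (rule mult_mono[OF ep pp]) (use P in auto)
    have b1: "bt \<le> Q0 * lg ^ j / real n ^ (k-1)"
    proof -
      have "exp 1 * (2*P*lg)^k = exp 1 * (2*P)^k * lg^k" by (simp add: power_mult_distrib)
      also have "\<dots> \<le> Q0 * lg ^ j" unfolding Q0_def
      proof -
        have "exp 1 * (2*P)^k \<le> exp 1 ^ 2 * (2*P)^(2*k)" by (rule epp)
        also have "\<dots> \<le> M * (exp 1 ^ 2 * (2*P)^(2*k))"
        proof -
          have h0: "0 \<le> exp 1 ^ 2 * (2*P)^(2*k)" using P by simp
          show ?thesis using mult_right_mono[OF M h0] by simp
        qed
        finally have A: "exp 1 * (2*P)^k \<le> M * exp 1 ^ 2 * (2*P)^(2*k)" by simp
        have B: "lg^k \<le> lg^j" using lpow[of k] unfolding j_def by simp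
        show "exp 1 * (2*P)^k * lg^k \<le> M * exp 1 ^ 2 * (2*P)^(2*k) * lg ^ j"
          by (rule mult_mono[OF A B]) (use M P l1 in auto)
      qed
      finally show ?thesis unfolding bt_def lg_def using nkp by (simp add: divide_right_mono)
    qed
    have b2: "bt * (M * lg) \<le> Q0 * lg ^ j / real n ^ (k-1)"
    proof -
      have "bt * (M * lg) = M * exp 1 * (2*P)^k * lg^(k+1) / real n ^ (k-1)"
        unfolding bt_def by (simp add: power_mult_distrib)
      also have "M * exp 1 * (2*P)^k * lg^(k+1) \<le> Q0 * lg ^ j"
      proof -
        have A: "M * exp 1 * (2*P)^k \<le> M * exp 1 ^ 2 * (2*P)^(2*k)"
          using mult_left_mono[OF epp, of M] M by (simp add: mult.assoc)
        have B: "lg^(k+1) \<le> lg^j" using lpow[of "k+1"] unfolding j_def by simp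
        show ?thesis unfolding Q0_def by (rule mult_mono[OF A B]) (use M P l1 in auto)
      qed
      hence "M * exp 1 * (2*P)^k * lg^(k+1) / real n ^ (k-1) \<le> Q0 * lg ^ j / real n ^ (k-1)"
        using nkp by (simp add: divide_right_mono)
      finally show ?thesis .
    qed
    have b3: "real n^(k-1) * (bt^2 * (M * lg)) = Q0 * lg ^ j / real n ^ (k-1)"
    proof -
      have "bt^2 = exp 1 ^ 2 * (2*P)^(2*k) * lg^(2*k) / (real n^(k-1))^2"
        unfolding bt_def by (simp add: power_mult_distrib power_divide power_mult[symmetric] mult.commute)
      then show ?thesis unfolding Q0_def j_def using nkp
        by (simp add: power2_eq_square field_simps)
    qed
    have i1: "1 / real n ^ k \<le> 1 / y"
    proof -
      have "y \<le> real n" by (rule yn)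
      also have "\<dots> \<le> real n ^ k" using n3 k by (intro self_le_power) auto
      finally show ?thesis using y0 by (simp add: frac_le)
    qed
    have i2: "real n^(k-1) * (1 / real n ^ k) \<le> 1 / y"
    proof -
      have "real n^(k-1) * (1 / real n ^ k) = 1 / real n" using nk nkp n0 by simp
      also have "\<dots> \<le> 1 / y" using yn y0 by (intro divide_left_mono) auto
      finally show ?thesis .
    qed
    have "bt \<le> Q / y" using b1 key by linarith
    also have "\<dots> \<le> 1" using ybig Q0 d y0
    proof -
      have "(2*Q+2)/\<delta> \<ge> 0" using Q0 d by simp
      hence "Q \<le> y" using ybig by linarith
      then show ?thesis using y0 by (simp add: divide_le_eq)
    qed
    finally show "exp 1 * (2*P*ln (real n))^k / real n^(k-1) \<le> 1" unfolding bt_def lg_def .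
    have "bt * (M * lg) + 1/real n^k + real n^(k-1) * (bt^2 * (M * lg) + 1/real n^k)
        = bt * (M * lg) + 1/real n^k + real n^(k-1) * (bt^2 * (M * lg)) + real n^(k-1) * (1/real n^k)"
      by (simp add: distrib_left)
    also have "\<dots> \<le> Q / y + 1 / y + Q / y + 1 / y" using b2 b3 key i1 i2 by linarith
    also have "\<dots> = (2*Q+2) / y" by (simp add: add_divide_distrib)
    also have "\<dots> \<le> \<delta>"
    proof -
      have "(2*Q+2)/\<delta> \<le> y" using ybig Q0 by linarith
      then show ?thesis using d y0 by (simp add: field_simps)
    qed
    finally show "(exp 1 * (2*P*ln (real n))^k / real n^(k-1)) * (M * ln (real n)) + 1/real n^k
     + real n^(k-1) * ((exp 1 * (2*P*ln (real n))^k / real n^(k-1))^2 * (M * ln (real n)) + 1/real n^k) \<le> \<delta>"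
      unfolding bt_def lg_def .
  qed
qed


lemma prob_closed:
  fixes V :: "'a set"
  assumes V: "finite V" and SV: "S \<subseteq> V" and fT: "finite T" and d: "d > 0"
    and deg: "\<forall>u\<in>V. real (card (nbhd V E u)) \<ge> d"
  shows "measure_pmf.prob (choices_pmf V E k dflt) {f. \<forall>u\<in>S. \<forall>i<k. f (u,i) \<in> T}
           \<le> (real (card T) / d) ^ (k * card S)"
proof -
  let ?B = "\<lambda>x::'a\<times>nat. if fst x \<in> S then T else UNIV"
  have ev: "{f. \<forall>u\<in>S. \<forall>i<k. f (u,i) \<in> T} = Pi (V \<times> {..<k}) ?B"
    using SV by (auto simp: Pi_def)
  have fin: "finite (V \<times> {..<k})" using V by simp
  have "measure_pmf.prob (choices_pmf V E k dflt) (Pi (V \<times> {..<k}) ?B)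
     = (\<Prod>x\<in>V\<times>{..<k}. measure_pmf.prob ((\<lambda>(v,i). pmf_of_set (nbhd V E v)) x) (?B x))"
    unfolding choices_pmf_def by (rule measure_Pi_pmf_Pi[OF fin])
  also have "\<dots> \<le> (\<Prod>x\<in>V\<times>{..<k}. if fst x \<in> S then real (card T) / d else 1)"
  proof (rule prod_mono)
    fix x assume x: "x \<in> V \<times> {..<k}"
    obtain v i where xv: "x = (v,i)" by (cases x)
    have v: "v \<in> V" using x xv by auto
    have fn: "finite (nbhd V E v)" using V by (simp add: nbhd_def)
    have cd: "real (card (nbhd V E v)) \<ge> d" using deg v by auto
    hence ne: "nbhd V E v \<noteq> {}" using d by auto
    have m: "measure_pmf.prob (pmf_of_set (nbhd V E v)) X = real (card (nbhd V E v \<inter> X)) / real (card (nbhd V E v))" for X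
      by (rule measure_pmf_of_set[OF ne fn])
    have "measure_pmf.prob (pmf_of_set (nbhd V E v)) (?B (v,i))
          \<le> (if fst (v,i) \<in> S then real (card T) / d else 1)"
    proof (cases "v \<in> S")
      case True
      have "real (card (nbhd V E v \<inter> T)) \<le> real (card T)"
        using fT by (simp add: card_mono)
      hence "real (card (nbhd V E v \<inter> T)) / real (card (nbhd V E v)) \<le> real (card T) / d"
        using cd d by (meson frac_le of_nat_0_le_iff)
      then show ?thesis using True m by simp
    next
      case False
      then show ?thesis by (simp add: measure_pmf.prob_le_1)
    qed
    then show "0 \<le> measure_pmf.prob ((\<lambda>(v,i). pmf_of_set (nbhd V E v)) x) (?B x) \<and>
          measure_pmf.prob ((\<lambda>(v,i). pmf_of_set (nbhd V E v)) x) (?B x)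
          \<le> (if fst x \<in> S then real (card T) / d else 1)"
      using xv by simp
  qed
  also have "\<dots> = (\<Prod>x\<in>{x\<in>V\<times>{..<k}. fst x \<in> S}. real (card T) / d)"
    by (rule prod.inter_filter[OF fin, symmetric])
  also have "{x\<in>V\<times>{..<k}. fst x \<in> S} = S \<times> {..<k}" using SV by auto
  also have "(\<Prod>x\<in>S \<times> {..<k}. real (card T) / d) = (real (card T) / d) ^ (k * card S)"
    by (simp add: card_cartesian_product mult.commute)
  finally show ?thesis using ev by simp
qed

lemma comp_in:
  assumes "v \<in> W" "u \<in> component W R v"
  shows "u \<in> W"
proof -
  have "(\<lambda>x y. x \<in> W \<and> y \<in> W \<and> R x y)\<^sup>*\<^sup>* v u" using assms(2) by (simp add: component_def)
  then show ?thesis using assms(1) by (induction rule: rtranclp_induct) auto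
qed

lemma comp_step:
  assumes "u \<in> component W R v" "u \<in> W" "w \<in> W" "R u w"
  shows "w \<in> component W R v"
  using assms unfolding component_def
  by (auto intro: rtranclp.rtrancl_into_rtrancl)

lemma comp_self: "v \<in> component W R v"
  by (simp add: component_def)


lemma sum_bound:
  fixes bt X :: real and j n k :: nat
  assumes b0: "0 \<le> bt" and b1: "bt \<le> 1" and j: "j \<ge> 1" and n: "n \<ge> 1" and X: "X \<ge> 0"
  shows "(\<Sum>s\<in>{j..n}. (if real s < X then bt^s else 0) + 1/real n^(k+1)) \<le> bt^j * X + 1/real n^k"
proof -
  have "(\<Sum>s\<in>{j..n}. (if real s < X then bt^s else 0) + 1/real n^(k+1))
     \<le> (\<Sum>s\<in>{j..n}. (if real s < X then bt^j else 0) + 1/real n^(k+1))"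
    using b0 b1 by (intro sum_mono) (auto intro: power_decreasing)
  also have "\<dots> = (\<Sum>s\<in>{j..n}. (if real s < X then bt^j else 0)) + real (card {j..n}) / real n^(k+1)"
    by (simp add: sum.distrib)
  also have "(\<Sum>s\<in>{j..n}. (if real s < X then bt^j else 0)) = (\<Sum>s\<in>{s\<in>{j..n}. real s < X}. bt^j)"
    by (rule sum.inter_filter[symmetric]) simp
  also have "\<dots> = bt^j * real (card {s\<in>{j..n}. real s < X})" by simp
  also have "\<dots> \<le> bt^j * X"
  proof -
    have sub: "{s\<in>{j..n}. real s < X} \<subseteq> {1..nat \<lfloor>X\<rfloor>}"
    proof
      fix s assume "s \<in> {s\<in>{j..n}. real s < X}"
      hence "real s \<le> X" "1 \<le> s" using j by auto
      hence "int s \<le> \<lfloor>X\<rfloor>" by (simp add: le_floor_iff)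
      then show "s \<in> {1..nat \<lfloor>X\<rfloor>}" using \<open>1 \<le> s\<close> by auto
    qed
    have "card {s\<in>{j..n}. real s < X} \<le> card {1..nat \<lfloor>X\<rfloor>}" by (rule card_mono[OF _ sub]) simp
    hence "real (card {s\<in>{j..n}. real s < X}) \<le> real (nat \<lfloor>X\<rfloor>)" by simp
    also have "\<dots> \<le> X" using X by linarith
    finally show ?thesis using b0 by (intro mult_left_mono) auto
  qed
  also have "real (card {j..n}) / real n^(k+1) \<le> 1 / real n^k"
  proof -
    have "real (card {j..n}) \<le> real n" using j by simp
    hence "real (card {j..n}) / real n^(k+1) \<le> real n / real n^(k+1)"
      by (intro divide_right_mono) auto
    also have "\<dots> = 1 / real n^k" using n by simp
    finally show ?thesis .
  qed
  finally show ?thesis by simp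
qed

theorem lemma2:
  fixes \<epsilon> :: real and k :: nat
  assumes "\<epsilon> > 0" and "k \<ge> 2"
  shows "\<forall>\<delta>>0. \<exists>N. \<forall>n\<ge>N. \<forall>(E :: nat \<Rightarrow> nat \<Rightarrow> bool) (L :: nat set).
     simple_graph {..<n} E \<longrightarrow>
     (\<forall>v\<in>{..<n}. real (card (nbhd {..<n} E v)) \<ge> (1/2 + \<epsilon>) * real n) \<longrightarrow>
     L \<subseteq> {..<n} \<longrightarrow>
     real (card L) \<le> (12 / \<epsilon>) * ln (real n) \<longrightarrow>
     (\<forall>u\<in>{..<n} - L. \<forall>w\<in>{..<n} - L. u \<noteq> w \<longrightarrow>
        real (card {x \<in> L. E u x \<and> E w x}) \<ge> 12 * ln (real n)) \<longrightarrow>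
     measure_pmf.prob (choices_pmf {..<n} E k 0)
       {f. (\<forall>v\<in>{..<n} - L.
              real (card (component ({..<n} - L) (Gk_edge k f) v)) \<ge> (1 / (8 * exp 1)) * real n)
         \<and> (\<forall>A. A \<subseteq> {..<n} \<longrightarrow> card A = k - 1 \<longrightarrow>
              (\<forall>v\<in>{..<n} - L - A.
                 component ({..<n} - L - A) (Gk_edge k f) v = {v} \<or>
                 real (card (component ({..<n} - L - A) (Gk_edge k f) v)) \<ge> (1 / (8 * exp 1)) * real n))}
       \<ge> 1 - \<delta>"
proof (intro allI impI)
  fix \<delta> :: real assume \<delta>: "\<delta> > 0"
  have eps: "\<epsilon> > 0" and k: "k \<ge> 2" using assms by auto
  define a where "a = 12/\<epsilon>"
  define M where "M = 2*(real k+1) + (real k + a)/(2*\<epsilon>)"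
  define P where "P = M + real k + a"
  have a0: "a \<ge> 0" unfolding a_def using eps by simp
  have M1: "M \<ge> 2*(real k+1)" unfolding M_def using eps a0 by simp
  have M2: "M * (2*\<epsilon>) \<ge> real k + a"
  proof -
    have "(real k + a)/(2*\<epsilon>) * (2*\<epsilon>) = real k + a" using eps by simp
    moreover have "2*(real k+1) * (2*\<epsilon>) \<ge> 0" using eps by simp
    ultimately show ?thesis unfolding M_def by (simp add: distrib_right)
  qed
  have Mge1: "M \<ge> 1" using M1 by simp
  have Pge1: "P \<ge> 1" unfolding P_def using Mge1 a0 by simp
  have ex: "\<exists>N\<ge>3. \<forall>n\<ge>N. exp 1 * (2*P*ln (real n))^k / real n^(k-1) \<le> 1 \<and>
     (exp 1 * (2*P*ln (real n))^k / real n^(k-1)) * (M * ln (real n)) + 1/real n^k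
     + real n^(k-1) * ((exp 1 * (2*P*ln (real n))^k / real n^(k-1))^2 * (M * ln (real n)) + 1/real n^k) \<le> \<delta>"
    by (rule final_analytic[OF k Mge1 Pge1 \<delta>])
  then obtain N where NN: "N \<ge> 3 \<and> (\<forall>n\<ge>N. exp 1 * (2*P*ln (real n))^k / real n^(k-1) \<le> 1 \<and>
     (exp 1 * (2*P*ln (real n))^k / real n^(k-1)) * (M * ln (real n)) + 1/real n^k
     + real n^(k-1) * ((exp 1 * (2*P*ln (real n))^k / real n^(k-1))^2 * (M * ln (real n)) + 1/real n^k) \<le> \<delta>)" ..
  have N3: "N \<ge> 3" using NN by (rule conjunct1)
  have HN: "\<forall>n\<ge>N. exp 1 * (2*P*ln (real n))^k / real n^(k-1) \<le> 1 \<and>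
     (exp 1 * (2*P*ln (real n))^k / real n^(k-1)) * (M * ln (real n)) + 1/real n^k
     + real n^(k-1) * ((exp 1 * (2*P*ln (real n))^k / real n^(k-1))^2 * (M * ln (real n)) + 1/real n^k) \<le> \<delta>"
    using NN by (rule conjunct2)
  show "\<exists>N. \<forall>n\<ge>N. \<forall>(E :: nat \<Rightarrow> nat \<Rightarrow> bool) (L :: nat set).
     simple_graph {..<n} E \<longrightarrow>
     (\<forall>v\<in>{..<n}. real (card (nbhd {..<n} E v)) \<ge> (1/2 + \<epsilon>) * real n) \<longrightarrow>
     L \<subseteq> {..<n} \<longrightarrow>
     real (card L) \<le> (12 / \<epsilon>) * ln (real n) \<longrightarrow>
     (\<forall>u\<in>{..<n} - L. \<forall>w\<in>{..<n} - L. u \<noteq> w \<longrightarrow>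
        real (card {x \<in> L. E u x \<and> E w x}) \<ge> 12 * ln (real n)) \<longrightarrow>
     measure_pmf.prob (choices_pmf {..<n} E k 0)
       {f. (\<forall>v\<in>{..<n} - L.
              real (card (component ({..<n} - L) (Gk_edge k f) v)) \<ge> (1 / (8 * exp 1)) * real n)
         \<and> (\<forall>A. A \<subseteq> {..<n} \<longrightarrow> card A = k - 1 \<longrightarrow>
              (\<forall>v\<in>{..<n} - L - A.
                 component ({..<n} - L - A) (Gk_edge k f) v = {v} \<or>
                 real (card (component ({..<n} - L - A) (Gk_edge k f) v)) \<ge> (1 / (8 * exp 1)) * real n))}
       \<ge> 1 - \<delta>"
  proof (intro exI[of _ N] allI impI)
    fix n :: nat and E :: "nat \<Rightarrow> nat \<Rightarrow> bool" and L :: "nat set"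
    assume nN: "N \<le> n" and G: "simple_graph {..<n} E"
      and deg: "\<forall>v\<in>{..<n}. real (card (nbhd {..<n} E v)) \<ge> (1/2 + \<epsilon>) * real n"
      and LV: "L \<subseteq> {..<n}" and Lc: "real (card L) \<le> (12 / \<epsilon>) * ln (real n)"
    define V where "V = {..<n}"
    define c :: real where "c = 1 / (8 * exp 1)"
    define p where "p = choices_pmf V E k 0"
    define d where "d = (1/2 + \<epsilon>) * real n"
    define bt where "bt = exp 1 * (2*P*ln (real n))^k / real n^(k-1)"
    define good where "good = {f. (\<forall>v\<in>{..<n} - L.
              real (card (component ({..<n} - L) (Gk_edge k f) v)) \<ge> (1 / (8 * exp 1)) * real n)
         \<and> (\<forall>A. A \<subseteq> {..<n} \<longrightarrow> card A = k - 1 \<longrightarrow>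
              (\<forall>v\<in>{..<n} - L - A.
                 component ({..<n} - L - A) (Gk_edge k f) v = {v} \<or>
                 real (card (component ({..<n} - L - A) (Gk_edge k f) v)) \<ge> (1 / (8 * exp 1)) * real n))}"
    define Ev where "Ev = (\<lambda>S T. {f::nat\<times>nat\<Rightarrow>nat. \<forall>u\<in>S. \<forall>i<k. f (u,i) \<in> T})"
    define I1 where "I1 = {s\<in>{1..n}. real s < c * real n}"
    define I2 where "I2 = {s\<in>{2..n}. real s < c * real n}"
    define SS where "SS = (\<lambda>s. {S. S \<subseteq> V \<and> card S = s})"
    define AA where "AA = {A. A \<subseteq> V \<and> card A = k - 1}"
    define B1 where "B1 = (\<Union>s\<in>I1. \<Union>S\<in>SS s. Ev S (S \<union> L))"
    define B2 where "B2 = (\<Union>s\<in>I2. \<Union>A\<in>AA. \<Union>S\<in>SS s. Ev S (S \<union> A \<union> L))"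
    have n3: "n \<ge> 3" using nN N3 by simp
    have n0: "real n > 0" using n3 by simp
    have d0: "d > 0" unfolding d_def using eps n0 by simp
    have finV: "finite V" unfolding V_def by simp
    have cardV: "card V = n" unfolding V_def by simp
    have degV: "\<forall>u\<in>V. real (card (nbhd V E u)) \<ge> d" using deg unfolding V_def d_def by simp
    have finL: "finite L" using LV finite_subset by blast
    have HNn: "bt \<le> 1" "bt * (M * ln (real n)) + 1/real n^k
     + real n^(k-1) * (bt^2 * (M * ln (real n)) + 1/real n^k) \<le> \<delta>"
      using HN nN unfolding bt_def by auto
    have bt0: "bt \<ge> 0" unfolding bt_def using Pge1 n3 ln_ge1[of n] by simp
    have lnn: "ln (real n) \<ge> 1" using n3 ln_ge1[of n] by simp
    have LcA: "real (card L) \<le> a * ln (real n)" using Lc unfolding a_def by simp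
    have supp: "f (u,i) \<in> V" if "f \<in> set_pmf p" "u \<in> V" "i < k" for f u i
    proof -
      have "f \<in> PiE_dflt (V \<times> {..<k}) 0 (set_pmf \<circ> (\<lambda>(v,i). pmf_of_set (nbhd V E v)))"
        using set_Pi_pmf_subset'[of "V \<times> {..<k}" 0 "\<lambda>(v,i). pmf_of_set (nbhd V E v)"] that(1) finV
        unfolding p_def choices_pmf_def by auto
      hence "f (u,i) \<in> set_pmf (pmf_of_set (nbhd V E u))" using that unfolding PiE_dflt_def by auto
      moreover have "real (card (nbhd V E u)) > 0" using degV that(2) d0 by fastforce
      hence "nbhd V E u \<noteq> {}" by auto
      moreover have "finite (nbhd V E u)" using finV by (simp add: nbhd_def)
      ultimately show ?thesis by (auto simp: nbhd_def)
    qed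
    have incl: "(UNIV - good) \<inter> set_pmf p \<subseteq> B1 \<union> B2"
    proof
      fix f assume f: "f \<in> (UNIV - good) \<inter> set_pmf p"
      hence fs: "f \<in> set_pmf p" and fg: "f \<notin> good" by auto
      have closed: "\<forall>u\<in>component W (Gk_edge k f) v. \<forall>i<k. f (u,i) \<in> component W (Gk_edge k f) v \<union> (V - W)"
        if W: "W \<subseteq> V" "v \<in> W" for W v
      proof (intro ballI allI impI)
        fix u i assume u: "u \<in> component W (Gk_edge k f) v" and i: "i < k"
        have uW: "u \<in> W" using comp_in[OF W(2) u] .
        have fV: "f (u,i) \<in> V" using supp[OF fs _ i] uW W by auto
        show "f (u,i) \<in> component W (Gk_edge k f) v \<union> (V - W)"
        proof (cases "f (u,i) \<in> W")
          case True
          have "Gk_edge k f u (f (u,i))" unfolding Gk_edge_def using i by auto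
          then show ?thesis using comp_step[OF u uW True] by auto
        qed (use fV in auto)
      qed
      have compfin: "finite (component W (Gk_edge k f) v)" "component W (Gk_edge k f) v \<subseteq> V"
        if W: "W \<subseteq> V" "v \<in> W" for W v
      proof -
        show "component W (Gk_edge k f) v \<subseteq> V" using comp_in[OF W(2)] W(1) by auto
        then show "finite (component W (Gk_edge k f) v)" using finV finite_subset by blast
      qed
      show "f \<in> B1 \<union> B2"
      proof (cases "\<forall>v\<in>{..<n} - L. real (card (component ({..<n} - L) (Gk_edge k f) v)) \<ge> c * real n")
        case False
        then obtain v where v: "v \<in> V - L" and small: "real (card (component (V - L) (Gk_edge k f) v)) < c * real n"
          unfolding V_def by auto
        define Sc where "Sc = component (V - L) (Gk_edge k f) v"
        have W: "V - L \<subseteq> V" "v \<in> V - L" using v by auto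
        have ScV: "Sc \<subseteq> V" and finSc: "finite Sc" using compfin[OF W] unfolding Sc_def by auto
        have vS: "v \<in> Sc" unfolding Sc_def by (rule comp_self)
        have s1: "card Sc \<ge> 1" using vS finSc by (auto simp: Suc_le_eq card_gt_0_iff)
        have sn: "card Sc \<le> n" using card_mono[OF finV ScV] cardV by simp
        have "card Sc \<in> I1" unfolding I1_def using s1 sn small Sc_def by auto
        moreover have "Sc \<in> SS (card Sc)" unfolding SS_def using ScV by auto
        moreover have "f \<in> Ev Sc (Sc \<union> L)"
          using closed[OF W] LV unfolding Ev_def Sc_def V_def by auto
        ultimately have "f \<in> B1" unfolding B1_def by (intro UN_I)
        then show ?thesis by simp
      next
        case True
        hence "\<not> (\<forall>A. A \<subseteq> {..<n} \<longrightarrow> card A = k - 1 \<longrightarrow>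
              (\<forall>v\<in>{..<n} - L - A.
                 component ({..<n} - L - A) (Gk_edge k f) v = {v} \<or>
                 real (card (component ({..<n} - L - A) (Gk_edge k f) v)) \<ge> (1 / (8 * exp 1)) * real n))"
          using fg unfolding good_def c_def by auto
        then obtain A v where A0: "A \<subseteq> {..<n}" "card A = k - 1" and v0: "v \<in> {..<n} - L - A"
          and nd: "\<not> (component ({..<n} - L - A) (Gk_edge k f) v = {v} \<or>
                 real (card (component ({..<n} - L - A) (Gk_edge k f) v)) \<ge> (1 / (8 * exp 1)) * real n)"
          by blast
        have A: "A \<subseteq> V" "card A = k - 1" using A0 unfolding V_def by auto
        have v: "v \<in> V - L - A" using v0 unfolding V_def by auto
        have ne: "component (V - L - A) (Gk_edge k f) v \<noteq> {v}" using nd unfolding V_def by blast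
        have small: "real (card (component (V - L - A) (Gk_edge k f) v)) < c * real n"
          using nd unfolding V_def c_def by (simp add: not_le)
        define Sc where "Sc = component (V - L - A) (Gk_edge k f) v"
        have W: "V - L - A \<subseteq> V" "v \<in> V - L - A" using v by auto
        have ScV: "Sc \<subseteq> V" and finSc: "finite Sc" using compfin[OF W] unfolding Sc_def by auto
        have vS: "v \<in> Sc" unfolding Sc_def by (rule comp_self)
        obtain w where w: "w \<in> Sc" "w \<noteq> v" using ne vS unfolding Sc_def by blast
        have "card {v, w} \<le> card Sc" by (rule card_mono[OF finSc]) (use vS w in auto)
        moreover have "card {v, w} = 2" using w(2) by simp
        ultimately have s2: "card Sc \<ge> 2" by simp
        have sn: "card Sc \<le> n" using card_mono[OF finV ScV] cardV by simp
        have "card Sc \<in> I2" unfolding I2_def using s2 sn small Sc_def by auto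
        moreover have "A \<in> AA" unfolding AA_def using A by auto
        moreover have "Sc \<in> SS (card Sc)" unfolding SS_def using ScV by auto
        moreover have "f \<in> Ev Sc (Sc \<union> A \<union> L)"
          using closed[OF W] LV unfolding Ev_def Sc_def V_def by auto
        ultimately have "f \<in> B2" unfolding B2_def by (intro UN_I)
        then show ?thesis by simp
      qed
    qed
    have evb: "measure_pmf.prob p (Ev S T) \<le> ((real s + real (k-1) + real (card L)) / d) ^ (k * s)"
      if "S \<in> SS s" "T \<subseteq> S \<union> A \<union> L" "A \<subseteq> V" "card A \<le> k - 1" for S T A s
    proof -
      have SV: "S \<subseteq> V" and cS: "card S = s" using that(1) unfolding SS_def by auto
      have finS: "finite S" using SV finV finite_subset by blast
      have finA: "finite A" using that(3) finV finite_subset by blast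
      have finT: "finite T" using that(2) finS finA finL finite_subset by blast
      have "measure_pmf.prob p (Ev S T) \<le> (real (card T) / d) ^ (k * card S)"
        unfolding p_def Ev_def by (rule prob_closed[OF finV SV finT d0 degV])
      also have "\<dots> \<le> ((real s + real (k-1) + real (card L)) / d) ^ (k * s)"
      proof -
        have "card T \<le> card (S \<union> A \<union> L)" using that(2) finS finA finL by (intro card_mono) auto
        also have "\<dots> \<le> card S + card A + card L" by (meson card_Un_le add_le_mono order_trans le_refl)
        finally have "real (card T) \<le> real s + real (k-1) + real (card L)" using cS that(4) by linarith
        hence q: "real (card T) / d \<le> (real s + real (k-1) + real (card L)) / d"
          using d0 by (intro divide_right_mono) auto
        show ?thesis unfolding cS using q d0 by (intro power_mono) auto
      qed
      finally show ?thesis .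
    qed
    have tb: "real (n choose s) * ((real s + real (k-1) + real (card L)) / d)^(k * s)
       \<le> (if real s < M * ln (real n) then bt^s else 0) + 1/real n^(k+1)"
      if "s \<ge> 1" "real s < c * real n" for s
      unfolding d_def bt_def
      by (rule term_bound[OF eps k n3 a0 M1 M2 P_def refl that(1) _ _ LcA])
         (use that(2) in \<open>auto simp: c_def\<close>)
    have cardSS: "card (SS s) = n choose s" for s
      unfolding SS_def V_def using n_subsets[of "{..<n}" s] by simp
    have finSS: "finite (SS s)" for s unfolding SS_def using finV by simp
    have finAA: "finite AA" unfolding AA_def using finV by simp
    have cardAA: "real (card AA) \<le> real n ^ (k-1)"
    proof -
      have "card AA = n choose (k-1)" unfolding AA_def V_def using n_subsets[of "{..<n}" "k-1"] by simp
      moreover have "(n choose (k-1)) \<le> n ^ (k-1)"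
      proof -
        have "(n choose (k-1)) * 1 \<le> (n choose (k-1)) * fact (k-1)"
          by (intro mult_le_mono2) (simp add: fact_ge_1)
        then show ?thesis using binomial_fact_pow[of n "k-1"] by linarith
      qed
      hence "real (n choose (k-1)) \<le> real (n ^ (k-1))" by (simp only: of_nat_le_iff)
      ultimately show ?thesis by simp
    qed
    have pB1: "measure_pmf.prob p B1 \<le> bt * (M * ln (real n)) + 1/real n^k"
    proof -
      have "measure_pmf.prob p B1 \<le> (\<Sum>s\<in>I1. measure_pmf.prob p (\<Union>S\<in>SS s. Ev S (S \<union> L)))"
        unfolding B1_def by (rule measure_pmf.finite_measure_subadditive_finite) (auto simp: I1_def)
      also have "\<dots> \<le> (\<Sum>s\<in>I1. (if real s < M * ln (real n) then bt^s else 0) + 1/real n^(k+1))"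
      proof (rule sum_mono)
        fix s assume s: "s \<in> I1"
        have "measure_pmf.prob p (\<Union>S\<in>SS s. Ev S (S \<union> L)) \<le> (\<Sum>S\<in>SS s. measure_pmf.prob p (Ev S (S \<union> L)))"
          by (rule measure_pmf.finite_measure_subadditive_finite) (auto simp: finSS)
        also have "\<dots> \<le> (\<Sum>S\<in>SS s. ((real s + real (k-1) + real (card L)) / d) ^ (k * s))"
          by (rule sum_mono, rule evb[where A="{}"]) auto
        also have "\<dots> = real (n choose s) * ((real s + real (k-1) + real (card L)) / d) ^ (k * s)"
          by (simp add: cardSS)
        also have "\<dots> \<le> (if real s < M * ln (real n) then bt^s else 0) + 1/real n^(k+1)"
          using s unfolding I1_def by (intro tb) auto
        finally show "measure_pmf.prob p (\<Union>S\<in>SS s. Ev S (S \<union> L)) \<le> (if real s < M * ln (real n) then bt^s else 0) + 1/real n^(k+1)" .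
      qed
      also have "\<dots> \<le> (\<Sum>s\<in>{1..n}. (if real s < M * ln (real n) then bt^s else 0) + 1/real n^(k+1))"
        using bt0 by (intro sum_mono2) (auto simp: I1_def)
      also have "\<dots> \<le> bt^1 * (M * ln (real n)) + 1/real n^k"
        using bt0 HNn(1) n3 Mge1 lnn by (intro sum_bound) auto
      finally show ?thesis by simp
    qed
    have pB2: "measure_pmf.prob p B2 \<le> real n^(k-1) * (bt^2 * (M * ln (real n)) + 1/real n^k)"
    proof -
      have "measure_pmf.prob p B2 \<le> (\<Sum>s\<in>I2. measure_pmf.prob p (\<Union>A\<in>AA. \<Union>S\<in>SS s. Ev S (S \<union> A \<union> L)))"
        unfolding B2_def by (rule measure_pmf.finite_measure_subadditive_finite) (auto simp: I2_def)
      also have "\<dots> \<le> (\<Sum>s\<in>I2. real n^(k-1) * ((if real s < M * ln (real n) then bt^s else 0) + 1/real n^(k+1)))"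
      proof (rule sum_mono)
        fix s assume s: "s \<in> I2"
        have "measure_pmf.prob p (\<Union>A\<in>AA. \<Union>S\<in>SS s. Ev S (S \<union> A \<union> L))
            \<le> (\<Sum>A\<in>AA. measure_pmf.prob p (\<Union>S\<in>SS s. Ev S (S \<union> A \<union> L)))"
          by (rule measure_pmf.finite_measure_subadditive_finite) (auto simp: finAA)
        also have "\<dots> \<le> (\<Sum>A\<in>AA. \<Sum>S\<in>SS s. measure_pmf.prob p (Ev S (S \<union> A \<union> L)))"
          by (rule sum_mono, rule measure_pmf.finite_measure_subadditive_finite) (auto simp: finSS)
        also have "\<dots> \<le> (\<Sum>A\<in>AA. \<Sum>S\<in>SS s. ((real s + real (k-1) + real (card L)) / d) ^ (k * s))"
          by (rule sum_mono, rule sum_mono, rule evb) (auto simp: AA_def)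
        also have "\<dots> = real (card AA) * (real (n choose s) * ((real s + real (k-1) + real (card L)) / d) ^ (k * s))"
          by (simp add: cardSS)
        also have "\<dots> \<le> real n^(k-1) * ((if real s < M * ln (real n) then bt^s else 0) + 1/real n^(k+1))"
        proof (rule mult_mono)
          show "real (n choose s) * ((real s + real (k-1) + real (card L)) / d) ^ (k * s)
              \<le> (if real s < M * ln (real n) then bt^s else 0) + 1/real n^(k+1)"
            using s unfolding I2_def by (intro tb) auto
          show "0 \<le> real (n choose s) * ((real s + real (k-1) + real (card L)) / d) ^ (k * s)"
            using d0 by simp
        qed (use cardAA in auto)
        finally show "measure_pmf.prob p (\<Union>A\<in>AA. \<Union>S\<in>SS s. Ev S (S \<union> A \<union> L))
            \<le> real n^(k-1) * ((if real s < M * ln (real n) then bt^s else 0) + 1/real n^(k+1))" .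
      qed
      also have "\<dots> = real n^(k-1) * (\<Sum>s\<in>I2. (if real s < M * ln (real n) then bt^s else 0) + 1/real n^(k+1))"
        by (simp add: sum_distrib_left)
      also have "\<dots> \<le> real n^(k-1) * (\<Sum>s\<in>{2..n}. (if real s < M * ln (real n) then bt^s else 0) + 1/real n^(k+1))"
        using bt0 by (intro mult_left_mono sum_mono2) (auto simp: I2_def)
      also have "\<dots> \<le> real n^(k-1) * (bt^2 * (M * ln (real n)) + 1/real n^k)"
        using bt0 HNn(1) n3 Mge1 lnn by (intro mult_left_mono sum_bound) auto
      finally show ?thesis .
    qed
    have "measure_pmf.prob p (UNIV - good) = measure_pmf.prob p ((UNIV - good) \<inter> set_pmf p)"
      by (simp add: measure_Int_set_pmf)
    also have "\<dots> \<le> measure_pmf.prob p (B1 \<union> B2)"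
      using incl by (intro measure_pmf.finite_measure_mono) auto
    also have "\<dots> \<le> measure_pmf.prob p B1 + measure_pmf.prob p B2"
      by (rule measure_Un_le) auto
    also have "\<dots> \<le> \<delta>" using pB1 pB2 HNn(2) by linarith
    finally have bad: "measure_pmf.prob p (UNIV - good) \<le> \<delta>" .
    have "measure_pmf.prob p good = 1 - measure_pmf.prob p (UNIV - good)"
      using measure_pmf.prob_compl[of "UNIV - good" p] by (simp add: Diff_Diff_Int)
    with bad have "measure_pmf.prob p good \<ge> 1 - \<delta>" by linarith
    then show "measure_pmf.prob (choices_pmf {..<n} E k 0) good \<ge> 1 - \<delta>"
      unfolding p_def V_def .
  qed
qed

end
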